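(* Let $n\ge2$ and $\mathbf{a}=(a_1,\dots,a_n)\in\Delta^{(n)}$. Define $q_i=a_1+\cdots+a_i+(n-i)a_i$ for $1\le i\le n$ and $q_{n-1+i}=(i-1)a_i+a_i+\cdots+a_n$ for $1\le i\le n$ (these two definitions agree at $q_n=1$; and $q_1=na_1$, $q_{2n-1}=na_n$). Let $\mathbf{P}=(P_1,\dots,P_n)\colon[na_1,na_n]\to\mathbb{R}^n$ be the continuous map such that: (i) for $1\le i\le n-1$ and $q\in[q_i,q_{i+1}]$: $P_k(q)=a_k$ for $k\le i$, and $P_{i+1}(q)=\cdots=P_n(q)=a_i+(q-q_i)/(n-i)$; (ii) for $1\le i\le n-1$ and $q\in[q_{n-1+i},q_{n+i}]$: $P_1(q)=\cdots=P_i(q)=a_i+(q-q_{n-1+i})/i$, and $P_k(q)=a_k$ for $k\ge i+1$. Then $\mathbf{P}$ is a generalized $n$-system on $[na_1,na_n]$ and, for each $j=1,\dots,n-1$, \[ \inf_{q\in[na_1,na_n]}\psi_j\big(q^{-1}\mathbf{P}(q)\big)=\psi_j(\mathbf{a})\quad\text{and}\quad \sup_{q\in[na_1,na_n]}\psi_j\big(q^{-1}\mathbf{P}(q)\big)=\frac{j}{n}. \]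
   Context: $\Delta^{(n)}=\{(a_1,\dots,a_n)\in\mathbb{R}^n: 0<a_1<\cdots<a_n,\ a_1+\cdots+a_n=1\}$ and $\bar\Delta^{(n)}=\{(a_1,\dots,a_n)\in\mathbb{R}^n: 0\le a_1\le\cdots\le a_n,\ a_1+\cdots+a_n=1\}$. For $j=1,\dots,n$, $\psi_j\colon\bar\Delta^{(n)}\to\mathbb{R}$ is $\psi_j(a_1,\dots,a_n)=a_1+\cdots+a_j$. A map $\mathbf{P}\colon I\to\mathbb{R}^n$ on an interval $I\subseteq[0,\infty)$ with non-empty interior is continuous piecewise linear if it is continuous, the set of points of $I$ where it is not differentiable (including endpoints of $I$ lying in $I$) is discrete in $I$, and its derivative is locally constant off that set. A generalized $n$-system on $I$ is a continuous piecewise linear map $\mathbf{P}=(P_1,\dots,P_n)\colon I\to\mathbb{R}^n$ such that: (G1) for each $q\in I$, $0\le P_1(q)\le\cdots\le P_n(q)$ and $P_1(q)+\cdots+P_n(q)=q$; (G2) on each non-empty open subinterval $H$ of $I$ on which $\mathbf{P}$ is differentiable, there are integers $1\le \underline{r}\le\overline{r}\le n$ such that $P_{\underline r},\dots,P_{\overline r}$ coincide on $H$ and have slope $1/(\overline r-\underline r+1)$, while every other $P_j$ is constant on $H$; (G3) if $q$ is an interior point of $I$ where $\mathbf{P}$ is not differentiable, and $\underline r,\overline r,\underline s,\overline s$ are the integers with $P_j'(q^-)=1/(\overline r-\underline r+1)$ for $\underline r\le j\le\overline r$ and $P_j'(q^+)=1/(\overline s-\underline s+1)$ for $\underline s\le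 j\le \overline s$, and if $\underline r<\overline s$, then $P_{\underline r}(q)=\cdots=P_{\overline s}(q)$. *)

theory Defs
  imports "HOL-Analysis.Analysis"
begin

text \<open>Points of R^n are represented as functions nat => real, with coordinates
  indexed by 1..n (values outside 1..n are irrelevant).\<close>

definition open_simplex :: "nat \<Rightarrow> (nat \<Rightarrow> real) \<Rightarrow> bool" where
  "open_simplex n a \<longleftrightarrow>
     0 < a 1 \<and> (\<forall>i\<in>{1..<n}. a i < a (Suc i)) \<and> (\<Sum>i=1..n. a i) = 1"

definition psi :: "nat \<Rightarrow> (nat \<Rightarrow> real) \<Rightarrow> real" where
  "psi j x = (\<Sum>i=1..j. x i)"

definition nondiff_set :: "nat \<Rightarrow> real set \<Rightarrow> (real \<Rightarrow> nat \<Rightarrow> real) \<Rightarrow> real set" where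
  "nondiff_set n I P =
     {q\<in>I. q \<notin> interior I \<or> \<not> (\<forall>j\<in>{1..n}. (\<lambda>t. P t j) differentiable (at q))}"

definition cont_piecewise_linear :: "nat \<Rightarrow> real set \<Rightarrow> (real \<Rightarrow> nat \<Rightarrow> real) \<Rightarrow> bool" where
  "cont_piecewise_linear n I P \<longleftrightarrow>
     (\<forall>j\<in>{1..n}. continuous_on I (\<lambda>t. P t j)) \<and>
     (\<forall>x\<in>I. \<exists>e>0. \<forall>y\<in>nondiff_set n I P. dist y x < e \<longrightarrow> y = x) \<and>
     (\<forall>x\<in>I - nondiff_set n I P. \<exists>e>0. \<forall>y\<in>I - nondiff_set n I P. dist y x < e \<longrightarrow>
        (\<forall>j\<in>{1..n}. deriv (\<lambda>t. P t j) y = deriv (\<lambda>t. P t j) x))"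

definition gen_system :: "nat \<Rightarrow> real set \<Rightarrow> (real \<Rightarrow> nat \<Rightarrow> real) \<Rightarrow> bool" where
  "gen_system n I P \<longleftrightarrow>
     is_interval I \<and> I \<subseteq> {0..} \<and> interior I \<noteq> {} \<and>
     cont_piecewise_linear n I P \<and>
     \<comment> \<open>(G1)\<close>
     (\<forall>q\<in>I. 0 \<le> P q 1 \<and> (\<forall>j\<in>{1..<n}. P q j \<le> P q (Suc j)) \<and> (\<Sum>j=1..n. P q j) = q) \<and>
     \<comment> \<open>(G2)\<close>
     (\<forall>H. is_interval H \<and> open H \<and> H \<noteq> {} \<and> H \<subseteq> I \<and>
          (\<forall>t\<in>H. \<forall>j\<in>{1..n}. (\<lambda>t. P t j) differentiable (at t)) \<longrightarrow>
        (\<exists>r1 r2. 1 \<le> r1 \<and> r1 \<le> r2 \<and> r2 \<le> n \<and>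
           (\<forall>t\<in>H. \<forall>j\<in>{r1..r2}. P t j = P t r1 \<and>
               ((\<lambda>t. P t j) has_real_derivative 1 / real (r2 - r1 + 1)) (at t)) \<and>
           (\<forall>j\<in>{1..n} - {r1..r2}. \<forall>t\<in>H. \<forall>u\<in>H. P t j = P u j))) \<and>
     \<comment> \<open>(G3)\<close>
     (\<forall>q\<in>interior I. q \<in> nondiff_set n I P \<longrightarrow>
        (\<forall>r1 r2 s1 s2. 1 \<le> r1 \<and> r1 \<le> r2 \<and> r2 \<le> n \<and> 1 \<le> s1 \<and> s1 \<le> s2 \<and> s2 \<le> n \<and>
           (\<forall>j\<in>{r1..r2}. ((\<lambda>t. P t j) has_real_derivative 1 / real (r2 - r1 + 1)) (at q within {..q})) \<and>
           (\<forall>j\<in>{s1..s2}. ((\<lambda>t. P t j) has_real_derivative 1 / real (s2 - s1 + 1)) (at q within {q..})) \<and>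
           r1 < s2 \<longrightarrow> (\<forall>j\<in>{r1..s2}. P q j = P q r1)))"

end

theory Submission
  imports Defs
begin

lemma aff_deriv_within:
  fixes f :: "real \<Rightarrow> real"
  assumes "x \<in> {c..d}" "\<forall>q\<in>{c..d}. f q = f c + s * (q - c)"
  shows "(f has_real_derivative s) (at x within {c..d})"
proof -
  have "((\<lambda>q. f c + s * (q - c)) has_real_derivative s) (at x within {c..d})"
    by (auto intro!: derivative_eq_intros)
  then show ?thesis
  proof (rule has_field_derivative_transform_within[where d=1])
    show "(0::real) < 1" by simp
    show "x \<in> {c..d}" by (rule assms(1))
    fix y assume y: "y \<in> {c..d}"
    show "f c + s * (y - c) = f y" using bspec[OF assms(2) y] by simp
  qed
qed

lemma aff_deriv_at:
  fixes f :: "real \<Rightarrow> real"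
  assumes "x \<in> {c<..<d}" "\<forall>q\<in>{c..d}. f q = f c + s * (q - c)"
  shows "(f has_real_derivative s) (at x)"
proof -
  have "((\<lambda>q. f c + s * (q - c)) has_real_derivative s) (at x)"
    by (auto intro!: derivative_eq_intros)
  then show ?thesis
  proof (rule has_field_derivative_transform_within_open[where S="{c<..<d}"])
    show "open {c<..<d}" by simp
    show "x \<in> {c<..<d}" by (rule assms(1))
    fix y assume y: "y \<in> {c<..<d}"
    then have y': "y \<in> {c..d}" by auto
    show "f c + s * (y - c) = f y" using bspec[OF assms(2) y'] by simp
  qed
qed

lemma deriv_unique_cd:
  fixes f :: "real \<Rightarrow> real"
  assumes "c < d" "x \<in> {c..d}"
    "(f has_real_derivative D1) (at x within {c..d})"
    "(f has_real_derivative D2) (at x within {c..d})"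
  shows "D1 = D2"
  using vector_derivative_unique_within_closed_interval[of c d x f D1 D2] assms
  by (simp add: has_real_derivative_iff_has_vector_derivative)


locale pwl =
  fixes n N :: nat and Q :: "nat \<Rightarrow> real" and sl :: "nat \<Rightarrow> nat \<Rightarrow> real"
    and P :: "real \<Rightarrow> nat \<Rightarrow> real" and lo hi :: "nat \<Rightarrow> nat"
  assumes N2: "N \<ge> 2"
   and Qinc: "\<forall>m\<in>{1..<N}. Q m < Q (Suc m)"
   and aff: "\<forall>m\<in>{1..<N}. \<forall>q\<in>{Q m..Q (Suc m)}. \<forall>k\<in>{1..n}. P q k = P (Q m) k + sl m k * (q - Q m)"
   and brk: "\<forall>m\<in>{2..<N}. \<exists>k\<in>{1..n}. sl (m-1) k \<noteq> sl m k"
   and reg: "\<forall>m\<in>{1..<N}. 1 \<le> lo m \<and> lo m \<le> hi m \<and> hi m \<le> n \<and>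
       (\<forall>k\<in>{1..n}. sl m k = (if k \<in> {lo m..hi m} then 1 / real (hi m - lo m + 1) else 0))"
   and regeq: "\<forall>m\<in>{1..<N}. \<forall>k\<in>{lo m..hi m}. P (Q m) k = P (Q m) (lo m)"
   and regeq3: "\<forall>m\<in>{2..<N}. \<forall>k\<in>{lo (m-1)..hi m}. P (Q m) k = P (Q m) (lo (m-1))"
begin

lemma affP: "m \<in> {1..<N} \<Longrightarrow> q \<in> {Q m..Q (Suc m)} \<Longrightarrow> k \<in> {1..n} \<Longrightarrow>
  P q k = P (Q m) k + sl m k * (q - Q m)"
  using aff by blast

lemma Q_less: "1 \<le> i \<Longrightarrow> i < j \<Longrightarrow> j \<le> N \<Longrightarrow> Q i < Q j"
proof (induction j)
  case 0 then show ?case by simp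
next
  case (Suc j)
  show ?case
  proof (cases "i = j")
    case True then show ?thesis using Qinc Suc.prems by auto
  next
    case False
    then have "Q i < Q j" using Suc by auto
    moreover have "Q j < Q (Suc j)" using Qinc Suc.prems False by auto
    ultimately show ?thesis by simp
  qed
qed

lemma Q_le: "1 \<le> i \<Longrightarrow> i \<le> j \<Longrightarrow> j \<le> N \<Longrightarrow> Q i \<le> Q j"
  using Q_less by (cases "i = j") (auto intro: less_imp_le)

lemma locate:
  assumes "q \<in> {Q 1..Q N}"
  shows "\<exists>m\<in>{1..<N}. q \<in> {Q m..Q (Suc m)}"
proof -
  define M where "M = {m\<in>{1..<N}. Q m \<le> q}"
  have fin: "finite M" unfolding M_def by simp
  have "1 \<in> M" using assms N2 unfolding M_def by auto
  then have ne: "M \<noteq> {}" by auto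
  define m where "m = Max M"
  have mM: "m \<in> M" using Max_in[OF fin ne] m_def by simp
  then have m1: "m \<in> {1..<N}" and qm: "Q m \<le> q" unfolding M_def by auto
  have "q \<le> Q (Suc m)"
  proof (cases "Suc m < N")
    case True
    have "Suc m \<notin> M"
    proof
      assume "Suc m \<in> M"
      then have "Suc m \<le> m" using Max_ge[OF fin] m_def by auto
      then show False by simp
    qed
    then show ?thesis using True m1 unfolding M_def by auto
  next
    case False
    then have "Suc m = N" using m1 by auto
    then show ?thesis using assms by auto
  qed
  then show ?thesis using m1 qm by auto
qed

lemma locate_open:
  assumes "q \<in> {Q 1..Q N}" "q \<notin> Q ` {1..N}"
  shows "\<exists>m\<in>{1..<N}. q \<in> {Q m<..<Q (Suc m)}"
proof -
  obtain m where m: "m \<in> {1..<N}" "q \<in> {Q m..Q (Suc m)}" using locate[OF assms(1)] by blast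
  have "q \<noteq> Q m" "q \<noteq> Q (Suc m)" using assms(2) m(1) by force+
  then have "q \<in> {Q m<..<Q (Suc m)}" using m by auto
  then show ?thesis using m(1) by blast
qed

lemma dP:
  assumes "m \<in> {1..<N}" "t \<in> {Q m<..<Q (Suc m)}" "k \<in> {1..n}"
  shows "((\<lambda>t. P t k) has_real_derivative sl m k) (at t)"
  by (rule aff_deriv_at[OF assms(2)]) (use affP[OF assms(1) _ assms(3)] in blast)

lemma dP_within:
  assumes "m \<in> {1..<N}" "t \<in> {Q m..Q (Suc m)}" "k \<in> {1..n}"
  shows "((\<lambda>t. P t k) has_real_derivative sl m k) (at t within {Q m..Q (Suc m)})"
  by (rule aff_deriv_within[OF assms(2)]) (use affP[OF assms(1) _ assms(3)] in blast)

lemma nd_break: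
  assumes "m \<in> {2..<N}"
  shows "\<not> (\<forall>j\<in>{1..n}. (\<lambda>t. P t j) differentiable (at (Q m)))"
proof
  assume dif: "\<forall>j\<in>{1..n}. (\<lambda>t. P t j) differentiable (at (Q m))"
  obtain k where k: "k \<in> {1..n}" "sl (m-1) k \<noteq> sl m k" using brk assms by blast
  have D: "((\<lambda>t. P t k) has_real_derivative deriv (\<lambda>t. P t k) (Q m)) (at (Q m))"
    using dif k(1) DERIV_deriv_iff_real_differentiable by blast
  have m1: "m - 1 \<in> {1..<N}" and sm: "Suc (m - 1) = m" using assms by auto
  have lt1: "Q (m-1) < Q m" using Qinc m1 sm by metis
  have "((\<lambda>t. P t k) has_real_derivative sl (m-1) k) (at (Q m) within {Q (m-1)..Q m})"
    using dP_within[OF m1, of "Q m" k] k(1) sm lt1 by auto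
  moreover have "((\<lambda>t. P t k) has_real_derivative deriv (\<lambda>t. P t k) (Q m)) (at (Q m) within {Q (m-1)..Q m})"
    using D has_field_derivative_at_within by blast
  moreover have "Q (m-1) < Q m" using Qinc m1 sm by metis
  ultimately have e1: "sl (m-1) k = deriv (\<lambda>t. P t k) (Q m)"
    using deriv_unique_cd by (metis atLeastAtMost_iff order_refl less_imp_le)
  have m2: "m \<in> {1..<N}" using assms by auto
  have lt2: "Q m < Q (Suc m)" using Qinc m2 by auto
  have "((\<lambda>t. P t k) has_real_derivative sl m k) (at (Q m) within {Q m..Q (Suc m)})"
    using dP_within[OF m2, of "Q m" k] k(1) lt2 by auto
  moreover have "((\<lambda>t. P t k) has_real_derivative deriv (\<lambda>t. P t k) (Q m)) (at (Q m) within {Q m..Q (Suc m)})"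
    using D has_field_derivative_at_within by blast
  moreover have "Q m < Q (Suc m)" using Qinc m2 by auto
  ultimately have e2: "sl m k = deriv (\<lambda>t. P t k) (Q m)"
    using deriv_unique_cd by (metis atLeastAtMost_iff order_refl less_imp_le)
  show False using e1 e2 k(2) by simp
qed

lemma nondiff_eq: "nondiff_set n {Q 1..Q N} P = Q ` {1..N}"
proof
  show "nondiff_set n {Q 1..Q N} P \<subseteq> Q ` {1..N}"
  proof
    fix q assume q: "q \<in> nondiff_set n {Q 1..Q N} P"
    show "q \<in> Q ` {1..N}"
    proof (rule ccontr)
      assume nq: "q \<notin> Q ` {1..N}"
      have qI: "q \<in> {Q 1..Q N}" using q unfolding nondiff_set_def by auto
      obtain m where m: "m \<in> {1..<N}" "q \<in> {Q m<..<Q (Suc m)}" using locate_open[OF qI nq] by blast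
      have "q \<noteq> Q 1" "q \<noteq> Q N" using nq N2 by force+
      then have "q \<in> interior {Q 1..Q N}" using qI by auto
      moreover have "\<forall>j\<in>{1..n}. (\<lambda>t. P t j) differentiable (at q)"
        using dP[OF m] real_differentiable_def by blast
      ultimately show False using q unfolding nondiff_set_def by auto
    qed
  qed
next
  show "Q ` {1..N} \<subseteq> nondiff_set n {Q 1..Q N} P"
  proof
    fix q assume "q \<in> Q ` {1..N}"
    then obtain m where m: "m \<in> {1..N}" "q = Q m" by auto
    have qI: "q \<in> {Q 1..Q N}" using m Q_le by auto
    show "q \<in> nondiff_set n {Q 1..Q N} P"
    proof (cases "m = 1 \<or> m = N")
      case True
      then have "q \<notin> interior {Q 1..Q N}" using m by auto
      then show ?thesis using qI unfolding nondiff_set_def by auto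
    next
      case False
      then have "m \<in> {2..<N}" using m by auto
      then show ?thesis using nd_break qI m unfolding nondiff_set_def by auto
    qed
  qed
qed


lemma G2: "\<forall>H. is_interval H \<and> open H \<and> H \<noteq> {} \<and> H \<subseteq> {Q 1..Q N} \<and>
          (\<forall>t\<in>H. \<forall>j\<in>{1..n}. (\<lambda>t. P t j) differentiable (at t)) \<longrightarrow>
        (\<exists>r1 r2. 1 \<le> r1 \<and> r1 \<le> r2 \<and> r2 \<le> n \<and>
           (\<forall>t\<in>H. \<forall>j\<in>{r1..r2}. P t j = P t r1 \<and>
               ((\<lambda>t. P t j) has_real_derivative 1 / real (r2 - r1 + 1)) (at t)) \<and>
           (\<forall>j\<in>{1..n} - {r1..r2}. \<forall>t\<in>H. \<forall>u\<in>H. P t j = P u j))"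
proof (intro allI impI)
  fix H :: "real set"
  assume H: "is_interval H \<and> open H \<and> H \<noteq> {} \<and> H \<subseteq> {Q 1..Q N} \<and>
          (\<forall>t\<in>H. \<forall>j\<in>{1..n}. (\<lambda>t. P t j) differentiable (at t))"
  have Hint: "H \<subseteq> {Q 1<..<Q N}"
    using interior_maximal[of H "{Q 1..Q N}"] H by auto
  have noQ: "t \<notin> Q ` {1..N}" if t: "t \<in> H" for t
  proof
    assume "t \<in> Q ` {1..N}"
    then obtain m where m: "m \<in> {1..N}" "t = Q m" by auto
    have "m \<noteq> 1" "m \<noteq> N" using Hint t m by auto
    then have "m \<in> {2..<N}" using m by auto
    then show False using nd_break H t m by auto
  qed
  obtain t0 where t0: "t0 \<in> H" using H by auto
  have t0I: "t0 \<in> {Q 1..Q N}" using H t0 by auto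
  obtain m where m: "m \<in> {1..<N}" "t0 \<in> {Q m<..<Q (Suc m)}"
    using locate_open[OF t0I noQ[OF t0]] by blast
  have m1: "m \<in> {1..N}" "Suc m \<in> {1..N}" using m by auto
  have iv: "\<And>a b x. a \<in> H \<Longrightarrow> b \<in> H \<Longrightarrow> a \<le> x \<Longrightarrow> x \<le> b \<Longrightarrow> x \<in> H"
    using H unfolding is_interval_1 by blast
  have Hsub: "t \<in> {Q m<..<Q (Suc m)}" if t: "t \<in> H" for t
  proof -
    have "Q m < t"
    proof (rule ccontr)
      assume "\<not> Q m < t"
      then have "Q m \<in> H" using iv[OF t t0, of "Q m"] m by auto
      then show False using noQ m1 by blast
    qed
    moreover have "t < Q (Suc m)"
    proof (rule ccontr)
      assume "\<not> t < Q (Suc m)"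
      then have "Q (Suc m) \<in> H" using iv[OF t0 t, of "Q (Suc m)"] m by auto
      then show False using noQ m1 by blast
    qed
    ultimately show ?thesis by auto
  qed
  have rg: "1 \<le> lo m \<and> lo m \<le> hi m \<and> hi m \<le> n \<and>
       (\<forall>k\<in>{1..n}. sl m k = (if k \<in> {lo m..hi m} then 1 / real (hi m - lo m + 1) else 0))"
    using reg m by blast
  show "\<exists>r1 r2. 1 \<le> r1 \<and> r1 \<le> r2 \<and> r2 \<le> n \<and>
           (\<forall>t\<in>H. \<forall>j\<in>{r1..r2}. P t j = P t r1 \<and>
               ((\<lambda>t. P t j) has_real_derivative 1 / real (r2 - r1 + 1)) (at t)) \<and>
           (\<forall>j\<in>{1..n} - {r1..r2}. \<forall>t\<in>H. \<forall>u\<in>H. P t j = P u j)"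
  proof (intro exI conjI ballI)
    show "1 \<le> lo m" "lo m \<le> hi m" "hi m \<le> n" using rg by auto
  next
    fix t j assume t: "t \<in> H" and j: "j \<in> {lo m..hi m}"
    have j1: "j \<in> {1..n}" "lo m \<in> {1..n}" using j rg by auto
    have tt: "t \<in> {Q m..Q (Suc m)}" using Hsub[OF t] by auto
    have "P t j = P (Q m) j + sl m j * (t - Q m)" using affP m tt j1 by blast
    also have "\<dots> = P (Q m) (lo m) + sl m (lo m) * (t - Q m)"
    proof -
      have "P (Q m) j = P (Q m) (lo m)" using regeq m(1) j by blast
      moreover have "sl m j = sl m (lo m)" using rg j j1 by auto
      ultimately show ?thesis by simp
    qed
    also have "\<dots> = P t (lo m)" using affP[OF m(1) tt j1(2)] by simp
    finally show "P t j = P t (lo m)" .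
    have "((\<lambda>t. P t j) has_real_derivative sl m j) (at t)" using dP m Hsub[OF t] j1 by blast
    then show "((\<lambda>t. P t j) has_real_derivative 1 / real (hi m - lo m + 1)) (at t)"
      using rg j j1 by auto
  next
    fix j t u assume j: "j \<in> {1..n} - {lo m..hi m}" and t: "t \<in> H" and u: "u \<in> H"
    have s0: "sl m j = 0" using rg j by auto
    have tt: "t \<in> {Q m..Q (Suc m)}" "u \<in> {Q m..Q (Suc m)}" using Hsub[OF t] Hsub[OF u] by auto
    have "P t j = P (Q m) j" "P u j = P (Q m) j" using affP[OF m(1) tt(1)] affP[OF m(1) tt(2)] j s0 by auto
    then show "P t j = P u j" by simp
  qed
qed

lemma G3: "\<forall>q\<in>interior {Q 1..Q N}. q \<in> nondiff_set n {Q 1..Q N} P \<longrightarrow>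
        (\<forall>r1 r2 s1 s2. 1 \<le> r1 \<and> r1 \<le> r2 \<and> r2 \<le> n \<and> 1 \<le> s1 \<and> s1 \<le> s2 \<and> s2 \<le> n \<and>
           (\<forall>j\<in>{r1..r2}. ((\<lambda>t. P t j) has_real_derivative 1 / real (r2 - r1 + 1)) (at q within {..q})) \<and>
           (\<forall>j\<in>{s1..s2}. ((\<lambda>t. P t j) has_real_derivative 1 / real (s2 - s1 + 1)) (at q within {q..})) \<and>
           r1 < s2 \<longrightarrow> (\<forall>j\<in>{r1..s2}. P q j = P q r1))"
proof (intro ballI impI allI)
  fix q r1 r2 s1 s2 j
  assume qi: "q \<in> interior {Q 1..Q N}" and qn: "q \<in> nondiff_set n {Q 1..Q N} P"
  assume A: "1 \<le> r1 \<and> r1 \<le> r2 \<and> r2 \<le> n \<and> 1 \<le> s1 \<and> s1 \<le> s2 \<and> s2 \<le> n \<and>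
           (\<forall>j\<in>{r1..r2}. ((\<lambda>t. P t j) has_real_derivative 1 / real (r2 - r1 + 1)) (at q within {..q})) \<and>
           (\<forall>j\<in>{s1..s2}. ((\<lambda>t. P t j) has_real_derivative 1 / real (s2 - s1 + 1)) (at q within {q..})) \<and>
           r1 < s2"
  assume j: "j \<in> {r1..s2}"
  obtain m where m: "m \<in> {1..N}" "q = Q m" using qn nondiff_eq by auto
  have "m \<noteq> 1" "m \<noteq> N" using qi m by auto
  then have m2: "m \<in> {2..<N}" using m by auto
  have ma: "m - 1 \<in> {1..<N}" "Suc (m - 1) = m" "m \<in> {1..<N}" using m2 by auto
  have lt1: "Q (m - 1) < Q m" using Qinc ma by metis
  have lt2: "Q m < Q (Suc m)" using Qinc ma by auto
  have rg1: "1 \<le> lo (m-1) \<and> lo (m-1) \<le> hi (m-1) \<and> hi (m-1) \<le> n \<and>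
       (\<forall>k\<in>{1..n}. sl (m-1) k = (if k \<in> {lo (m-1)..hi (m-1)} then 1 / real (hi (m-1) - lo (m-1) + 1) else 0))"
    using reg ma by blast
  have rg2: "1 \<le> lo m \<and> lo m \<le> hi m \<and> hi m \<le> n \<and>
       (\<forall>k\<in>{1..n}. sl m k = (if k \<in> {lo m..hi m} then 1 / real (hi m - lo m + 1) else 0))"
    using reg ma by blast
  have r1n: "r1 \<in> {1..n}" "s2 \<in> {1..n}" using A by auto
  have "((\<lambda>t. P t r1) has_real_derivative 1 / real (r2 - r1 + 1)) (at q within {..q})"
    using A by auto
  then have d1: "((\<lambda>t. P t r1) has_real_derivative 1 / real (r2 - r1 + 1)) (at (Q m) within {Q (m-1)..Q m})"
    using has_field_derivative_subset[of _ _ q "{..q}" "{Q (m-1)..Q m}"] m by auto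
  have d1': "((\<lambda>t. P t r1) has_real_derivative sl (m-1) r1) (at (Q m) within {Q (m-1)..Q m})"
    using dP_within[OF ma(1), of "Q m" r1] ma lt1 r1n by auto
  have "sl (m-1) r1 = 1 / real (r2 - r1 + 1)"
    using deriv_unique_cd[OF lt1 _ d1' d1] lt1 by auto
  then have "sl (m-1) r1 \<noteq> 0" by simp
  then have lo1: "lo (m-1) \<le> r1" using rg1 r1n by (auto split: if_splits)
  have "((\<lambda>t. P t s2) has_real_derivative 1 / real (s2 - s1 + 1)) (at q within {q..})"
    using A by auto
  then have d2: "((\<lambda>t. P t s2) has_real_derivative 1 / real (s2 - s1 + 1)) (at (Q m) within {Q m..Q (Suc m)})"
    using has_field_derivative_subset[of _ _ q "{q..}" "{Q m..Q (Suc m)}"] m by auto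
  have d2': "((\<lambda>t. P t s2) has_real_derivative sl m s2) (at (Q m) within {Q m..Q (Suc m)})"
    using dP_within[OF ma(3), of "Q m" s2] lt2 r1n by auto
  have "sl m s2 = 1 / real (s2 - s1 + 1)"
    using deriv_unique_cd[OF lt2 _ d2' d2] lt2 by auto
  then have "sl m s2 \<noteq> 0" by simp
  then have hi2: "s2 \<le> hi m" using rg2 r1n by (auto split: if_splits)
  have R3: "\<And>k. k \<in> {lo (m-1)..hi m} \<Longrightarrow> P (Q m) k = P (Q m) (lo (m-1))"
    using regeq3 m2 by blast
  have "P (Q m) j = P (Q m) (lo (m-1))" using j lo1 hi2 by (intro R3) auto
  moreover have "P (Q m) r1 = P (Q m) (lo (m-1))" using A lo1 hi2 by (intro R3) auto
  ultimately show "P q j = P q r1" using m by simp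
qed

lemma cpl:
  assumes cont: "\<forall>j\<in>{1..n}. continuous_on {Q 1..Q N} (\<lambda>q. P q j)"
  shows "cont_piecewise_linear n {Q 1..Q N} P"
  unfolding cont_piecewise_linear_def
proof (intro conjI ballI)
  show "\<And>j. j \<in> {1..n} \<Longrightarrow> continuous_on {Q 1..Q N} (\<lambda>t. P t j)" using cont by auto
next
  fix x assume x: "x \<in> {Q 1..Q N}"
  obtain d where d: "d > 0" "\<forall>y\<in>Q ` {1..N}. y \<noteq> x \<longrightarrow> d \<le> dist x y"
    using finite_set_avoid[of "Q ` {1..N}" x] by auto
  show "\<exists>e>0. \<forall>y\<in>nondiff_set n {Q 1..Q N} P. dist y x < e \<longrightarrow> y = x"
    unfolding nondiff_eq using d by (auto simp: dist_commute intro!: exI[of _ d])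
next
  fix x assume x: "x \<in> {Q 1..Q N} - nondiff_set n {Q 1..Q N} P"
  have x': "x \<in> {Q 1..Q N}" "x \<notin> Q ` {1..N}" using x unfolding nondiff_eq by auto
  obtain m where m: "m \<in> {1..<N}" "x \<in> {Q m<..<Q (Suc m)}"
    using locate_open[OF x'] by blast
  define e where "e = min (x - Q m) (Q (Suc m) - x)"
  have e: "e > 0" using m e_def by auto
  show "\<exists>e>0. \<forall>y\<in>{Q 1..Q N} - nondiff_set n {Q 1..Q N} P. dist y x < e \<longrightarrow>
        (\<forall>j\<in>{1..n}. deriv (\<lambda>t. P t j) y = deriv (\<lambda>t. P t j) x)"
  proof (intro exI conjI ballI impI)
    show "e > 0" by (rule e)
  next
    fix y j assume y: "y \<in> {Q 1..Q N} - nondiff_set n {Q 1..Q N} P" "dist y x < e" and j: "j \<in> {1..n}"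
    have "y \<in> {Q m<..<Q (Suc m)}" using y(2) m unfolding e_def dist_real_def by auto
    then have "deriv (\<lambda>t. P t j) y = sl m j" using dP[OF m(1) _ j] DERIV_imp_deriv by blast
    moreover have "deriv (\<lambda>t. P t j) x = sl m j" using dP[OF m j] DERIV_imp_deriv by blast
    ultimately show "deriv (\<lambda>t. P t j) y = deriv (\<lambda>t. P t j) x" by simp
  qed
qed

end


lemma sum_split1:
  fixes f :: "nat \<Rightarrow> real"
  assumes "i \<le> j"
  shows "sum f {1..j} = sum f {1..i} + sum f {Suc i..j}"
proof -
  have "{1..j} = {1..i} \<union> {Suc i..j}" using assms by auto
  moreover have "{1..i} \<inter> {Suc i..j} = {}" by auto
  ultimately show ?thesis by (simp add: sum.union_disjoint)
qed

definition asc :: "nat \<Rightarrow> (nat \<Rightarrow> real) \<Rightarrow> bool" where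
  "asc n p \<longleftrightarrow> (\<forall>k\<in>{1..<n}. p k \<le> p (Suc k))"

lemma asc_le:
  assumes "asc n p" "1 \<le> k" "k \<le> l" "l \<le> n"
  shows "p k \<le> p l"
  using assms(3,4)
proof (induction l)
  case 0 then show ?case using assms by simp
next
  case (Suc l)
  show ?case
  proof (cases "k = Suc l")
    case True then show ?thesis by simp
  next
    case False
    then have "p k \<le> p l" using Suc by auto
    moreover have "p l \<le> p (Suc l)" using assms(1,2) Suc.prems False unfolding asc_def by auto
    ultimately show ?thesis by simp
  qed
qed

lemma psi_le_last:
  assumes "asc n p" "1 \<le> j" "j \<le> n" "\<forall>k\<in>{1..j}. p k \<le> c"
  shows "psi j p \<le> real j * c"
  using sum_bounded_above[of "{1..j}" p c] assms unfolding psi_def by auto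

lemma avg:
  assumes "asc n p" "1 \<le> j" "j \<le> i" "i \<le> n"
  shows "real i * psi j p \<le> real j * psi i p"
proof -
  have h1: "psi j p \<le> real j * p j"
    using psi_le_last[of n p j "p j"] asc_le[OF assms(1)] assms by auto
  have h2: "real (i - j) * p j \<le> sum p {Suc j..i}"
    using sum_bounded_below[of "{Suc j..i}" "p j" p] asc_le[OF assms(1)] assms by auto
  have e: "psi i p = psi j p + sum p {Suc j..i}"
    unfolding psi_def using sum_split1[OF assms(3)] by simp
  have ri: "real i = real j + real (i - j)" using assms by auto
  have "real i * psi j p = real j * psi j p + real (i - j) * psi j p" by (simp add: ri algebra_simps)
  also have "\<dots> \<le> real j * psi j p + real (i - j) * (real j * p j)"
    using h1 by (simp add: mult_left_mono)
  also have "\<dots> = real j * psi j p + real j * (real (i - j) * p j)" by simp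
  also have "\<dots> \<le> real j * psi j p + real j * sum p {Suc j..i}"
    using h2 by (simp add: mult_left_mono)
  also have "\<dots> = real j * psi i p" by (simp add: e algebra_simps)
  finally show ?thesis .
qed

lemma simplex_asc:
  assumes "open_simplex n a"
  shows "asc n a" "\<And>k. k \<in> {1..n} \<Longrightarrow> a k > 0" "sum a {1..n} = 1"
proof -
  show as: "asc n a" using assms unfolding open_simplex_def asc_def by (auto intro: less_imp_le)
  show "sum a {1..n} = 1" using assms unfolding open_simplex_def by auto
  fix k assume k: "k \<in> {1..n}"
  have "a 1 \<le> a k" using asc_le[OF as, of 1 k] k by auto
  then show "a k > 0" using assms unfolding open_simplex_def by auto
qed

lemma phase1:
  assumes os: "open_simplex n a" and i: "i \<in> {1..n-1}" and x: "a i \<le> x" "x \<le> a (Suc i)"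
    and p: "p = (\<lambda>k. if k \<le> i then a k else x)"
  shows "asc n p" "p 1 > 0" "sum p {1..n} = sum a {1..i} + real (n - i) * x"
    "\<And>j. j \<in> {1..n-1} \<Longrightarrow> psi j a * sum p {1..n} \<le> psi j p"
proof -
  have as: "asc n a" and apos: "\<And>k. k \<in> {1..n} \<Longrightarrow> a k > 0" and s1: "sum a {1..n} = 1"
    using simplex_asc[OF os] by auto
  show "asc n p" unfolding asc_def
  proof
    fix k assume k: "k \<in> {1..<n}"
    show "p k \<le> p (Suc k)"
      using as k x unfolding p asc_def by (cases "k < i"; cases "k = i") auto
  qed
  show "p 1 > 0" using apos i p by auto
  have sp: "sum p {1..n} = sum a {1..i} + real (n - i) * x"
  proof -
    have "sum p {1..n} = sum p {1..i} + sum p {Suc i..n}" by (rule sum_split1) (use i in auto)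
    moreover have "sum p {1..i} = sum a {1..i}" unfolding p by (rule sum.cong) auto
    moreover have "sum p {Suc i..n} = real (n - i) * x" unfolding p by simp
    ultimately show ?thesis by simp
  qed
  then show "sum p {1..n} = sum a {1..i} + real (n - i) * x" .
  have "a i > 0" by (rule apos) (use i in auto)
  then have xpos: "x > 0" using x by auto
  fix j assume j: "j \<in> {1..n-1}"
  define S where "S = sum a {1..i}"
  have S0: "S \<ge> 0" unfolding S_def using apos i by (intro sum_nonneg) (auto intro: less_imp_le)
  show "psi j a * sum p {1..n} \<le> psi j p"
  proof (cases "j \<le> i")
    case True
    have pj: "psi j p = psi j a" unfolding psi_def p using True by (intro sum.cong) auto
    have "sum p {1..n} \<le> sum a {1..n}"
    proof (rule sum_mono)
      fix k assume k: "k \<in> {1..n}"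
      show "p k \<le> a k"
      proof (cases "k \<le> i")
        case False
        then have "a (Suc i) \<le> a k" using asc_le[OF as, of "Suc i" k] k by auto
        then show ?thesis using False x unfolding p by auto
      qed (auto simp: p)
    qed
    moreover have "psi j a \<ge> 0" unfolding psi_def using apos j by (intro sum_nonneg) (auto intro: less_imp_le)
    ultimately have "psi j a * sum p {1..n} \<le> psi j a * 1" using s1 by (intro mult_left_mono) auto
    then show ?thesis using pj by simp
  next
    case False
    define A where "A = sum a {Suc i..j}"
    define T where "T = sum a {Suc j..n}"
    define m where "m = a (Suc j)"
    define u where "u = real (j - i)"
    define v where "v = real (n - j)"
    have u0: "u \<ge> 0" "v \<ge> 0" unfolding u_def v_def by auto
    have psa: "psi j a = S + A" unfolding psi_def S_def A_def by (rule sum_split1) (use False in auto)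
    have psp: "psi j p = S + u * x"
    proof -
      have "psi j p = sum p {1..i} + sum p {Suc i..j}" unfolding psi_def by (rule sum_split1) (use False in auto)
      moreover have "sum p {1..i} = S" unfolding p S_def by (rule sum.cong) auto
      moreover have "sum p {Suc i..j} = u * x" unfolding p u_def by simp
      ultimately show ?thesis by simp
    qed
    have one: "S + A + T = 1"
    proof -
      have "sum a {1..n} = sum a {1..j} + T" unfolding T_def by (rule sum_split1) (use j in auto)
      then show ?thesis using s1 psa unfolding psi_def by simp
    qed
    have sp2: "sum p {1..n} = S + (u + v) * x"
      using sp False j unfolding S_def u_def v_def by (simp add: of_nat_diff algebra_simps)
    have hA: "A \<le> u * m"
      using sum_bounded_above[of "{Suc i..j}" a m] asc_le[OF as] j False
      unfolding A_def u_def m_def by auto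
    have hT: "v * m \<le> T"
      using sum_bounded_below[of "{Suc j..n}" m a] asc_le[OF as] j
      unfolding T_def v_def m_def by auto
    have sj: "Suc j \<le> n" using j by auto
    have hx: "x \<le> m" using x asc_le[OF as, of "Suc i" "Suc j"] False sj unfolding m_def by auto
    have B0: "S + u * x \<ge> 0" using S0 u0 xpos by auto
    have h1: "v * m * (S + u * x) \<le> T * (S + u * x)" using hT B0 by (intro mult_right_mono)
    have h2: "(S + A) * (v * x) \<le> (S + u * m) * (v * x)" using hA u0 xpos by (intro mult_right_mono) auto
    have h3: "0 \<le> v * S * (m - x)" using u0 S0 hx by auto
    have "psi j a * sum p {1..n} = (S + A) * (S + u * x) + (S + A) * (v * x)"
      unfolding psa sp2 by (simp add: algebra_simps)
    also have "\<dots> \<le> (S + A) * (S + u * x) + T * (S + u * x)"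
      using h1 h2 h3 by (simp add: algebra_simps)
    also have "\<dots> = (S + A + T) * (S + u * x)" by (simp add: algebra_simps)
    also have "\<dots> = psi j p" using one psp by simp
    finally show ?thesis .
  qed
qed


lemma phase2:
  assumes os: "open_simplex n a" and i: "i \<in> {1..n-1}" and y: "a i \<le> y" "y \<le> a (Suc i)"
    and p: "p = (\<lambda>k. if k \<le> i then y else a k)"
  shows "asc n p" "p 1 > 0" "sum p {1..n} = real i * y + sum a {Suc i..n}"
    "\<And>j. j \<in> {1..n-1} \<Longrightarrow> psi j a * sum p {1..n} \<le> psi j p"
proof -
  have as: "asc n a" and apos: "\<And>k. k \<in> {1..n} \<Longrightarrow> a k > 0" and s1: "sum a {1..n} = 1"
    using simplex_asc[OF os] by auto
  show "asc n p" unfolding asc_def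
  proof
    fix k assume k: "k \<in> {1..<n}"
    show "p k \<le> p (Suc k)"
      using as k y unfolding p asc_def by (cases "k < i"; cases "k = i") auto
  qed
  have "a i > 0" by (rule apos) (use i in auto)
  then have ypos: "y > 0" using y by auto
  show "p 1 > 0" using ypos i p by auto
  define S where "S = sum a {1..i}"
  define T where "T = sum a {Suc i..n}"
  have ST: "S + T = 1" unfolding S_def T_def using s1 sum_split1[of i n a] i by auto
  have T0: "T \<ge> 0" unfolding T_def using apos by (intro sum_nonneg) (auto intro: less_imp_le)
  have sp: "sum p {1..n} = real i * y + T"
  proof -
    have "sum p {1..n} = sum p {1..i} + sum p {Suc i..n}" by (rule sum_split1) (use i in auto)
    moreover have "sum p {1..i} = sum (\<lambda>k. y) {1..i}" unfolding p by (rule sum.cong) auto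
    moreover have "sum p {Suc i..n} = T" unfolding p T_def by (rule sum.cong) auto
    ultimately show ?thesis by simp
  qed
  then show "sum p {1..n} = real i * y + sum a {Suc i..n}" unfolding T_def .
  have hS: "S \<le> real i * y"
    using psi_le_last[OF as, of i y] asc_le[OF as, of _ i] y i unfolding psi_def S_def
    by force
  fix j assume j: "j \<in> {1..n-1}"
  show "psi j a * sum p {1..n} \<le> psi j p"
  proof (cases "i \<le> j")
    case True
    define B where "B = sum a {Suc i..j}"
    have psa: "psi j a = S + B" unfolding psi_def S_def B_def by (rule sum_split1) (use True in auto)
    have psp: "psi j p = real i * y + B"
    proof -
      have "psi j p = sum p {1..i} + sum p {Suc i..j}" unfolding psi_def by (rule sum_split1) (use True in auto)
      moreover have "sum p {1..i} = sum (\<lambda>k. y) {1..i}" unfolding p by (rule sum.cong) auto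
      moreover have "sum p {Suc i..j} = B" unfolding p B_def by (rule sum.cong) auto
      ultimately show ?thesis by simp
    qed
    have "psi j a + sum a {Suc j..n} = 1"
      using s1 sum_split1[of j n a] j unfolding psi_def by auto
    moreover have "sum a {Suc j..n} \<ge> 0" using apos by (intro sum_nonneg) (auto intro: less_imp_le)
    ultimately have pa1: "psi j a \<le> 1" by linarith
    define D where "D = real i * y - S"
    have D0: "D \<ge> 0" using hS D_def by simp
    have h: "psi j a * D \<le> 1 * D" using pa1 D0 by (intro mult_right_mono)
    have e: "sum p {1..n} = 1 + D" using sp ST D_def by simp
    have "psi j a * sum p {1..n} = psi j a + psi j a * D" unfolding e by (simp add: algebra_simps)
    also have "\<dots> \<le> psi j a + D" using h by simp
    also have "\<dots> = psi j p" unfolding psa psp D_def by simp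
    finally show ?thesis .
  next
    case False
    have psp: "psi j p = real j * y"
    proof -
      have "psi j p = sum (\<lambda>k. y) {1..j}" unfolding psi_def p using False by (intro sum.cong) auto
      then show ?thesis by simp
    qed
    have av: "real i * psi j a \<le> real j * S"
      using avg[OF as, of j i] False i j unfolding S_def psi_def by auto
    have pl: "psi j a \<le> real j * y"
    proof (rule psi_le_last[OF as])
      show "\<forall>k\<in>{1..j}. a k \<le> y"
      proof
        fix k assume k: "k \<in> {1..j}"
        have "a k \<le> a i" using asc_le[OF as, of k i] k False i by auto
        then show "a k \<le> y" using y by simp
      qed
    qed (use j in auto)
    have h1: "(real i * psi j a) * y \<le> (real j * S) * y" using av ypos by (intro mult_right_mono) auto
    have h2: "psi j a * T \<le> (real j * y) * T" using pl T0 by (intro mult_right_mono)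
    have "psi j a * sum p {1..n} = (real i * psi j a) * y + psi j a * T" unfolding sp by (simp add: algebra_simps)
    also have "\<dots> \<le> (real j * S) * y + (real j * y) * T" using h1 h2 by simp
    also have "\<dots> = real j * y * (S + T)" by (simp add: algebra_simps)
    also have "\<dots> = psi j p" using ST psp by simp
    finally show ?thesis .
  qed
qed



theorem mainTheorem8:
  fixes n :: nat and a :: "nat \<Rightarrow> real" and qq :: "nat \<Rightarrow> real"
    and P :: "real \<Rightarrow> nat \<Rightarrow> real"
  assumes "n \<ge> 2"
    and "open_simplex n a"
    and "\<forall>i\<in>{1..n}. qq i = (\<Sum>k=1..i. a k) + real (n - i) * a i"
    and "\<forall>i\<in>{1..n}. qq (n - 1 + i) = real (i - 1) * a i + (\<Sum>k=i..n. a k)"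
    and "\<forall>j\<in>{1..n}. continuous_on {real n * a 1 .. real n * a n} (\<lambda>q. P q j)"
    and "\<forall>i\<in>{1..n-1}. \<forall>q\<in>{qq i .. qq (i + 1)}.
           (\<forall>k\<in>{1..i}. P q k = a k) \<and>
           (\<forall>k\<in>{i+1..n}. P q k = a i + (q - qq i) / real (n - i))"
    and "\<forall>i\<in>{1..n-1}. \<forall>q\<in>{qq (n - 1 + i) .. qq (n + i)}.
           (\<forall>k\<in>{1..i}. P q k = a i + (q - qq (n - 1 + i)) / real i) \<and>
           (\<forall>k\<in>{i+1..n}. P q k = a k)"
  shows "gen_system n {real n * a 1 .. real n * a n} P \<and>
         (\<forall>j\<in>{1..n-1}.
            Inf ((\<lambda>q. psi j (\<lambda>k. P q k / q)) ` {real n * a 1 .. real n * a n}) = psi j a \<and>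
            Sup ((\<lambda>q. psi j (\<lambda>k. P q k / q)) ` {real n * a 1 .. real n * a n}) = real j / real n)"
proof -
  note n2 = assms(1) and os = assms(2) and Q1f = assms(3) and Q2f = assms(4)
    and cont = assms(5) and ph1 = assms(6) and ph2 = assms(7)
  have as: "asc n a" and apos: "\<And>k. k \<in> {1..n} \<Longrightarrow> a k > 0" and s1: "sum a {1..n} = 1"
    using simplex_asc[OF os] by auto
  have ainc: "\<And>i. i \<in> {1..<n} \<Longrightarrow> a i < a (Suc i)" using os unfolding open_simplex_def by auto
  have P1: "\<And>i q k. i \<in> {1..n-1} \<Longrightarrow> q \<in> {qq i..qq (Suc i)} \<Longrightarrow> k \<in> {1..n} \<Longrightarrow>
      P q k = (if k \<le> i then a k else a i + (q - qq i) / real (n - i))"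
  proof -
    fix i q k assume i: "i \<in> {1..n-1}" and q: "q \<in> {qq i..qq (Suc i)}" and k: "k \<in> {1..n}"
    have A: "(\<forall>k\<in>{1..i}. P q k = a k) \<and> (\<forall>k\<in>{i+1..n}. P q k = a i + (q - qq i) / real (n - i))"
      using ph1 i q by simp
    show "P q k = (if k \<le> i then a k else a i + (q - qq i) / real (n - i))"
      using A k by (cases "k \<le> i") auto
  qed
  have P2: "\<And>i q k. i \<in> {1..n-1} \<Longrightarrow> q \<in> {qq (n - 1 + i)..qq (n + i)} \<Longrightarrow> k \<in> {1..n} \<Longrightarrow>
      P q k = (if k \<le> i then a i + (q - qq (n - 1 + i)) / real i else a k)"
  proof -
    fix i q k assume i: "i \<in> {1..n-1}" and q: "q \<in> {qq (n - 1 + i)..qq (n + i)}" and k: "k \<in> {1..n}"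
    have A: "(\<forall>k\<in>{1..i}. P q k = a i + (q - qq (n - 1 + i)) / real i) \<and> (\<forall>k\<in>{i+1..n}. P q k = a k)"
      using ph2 i q by blast
    show "P q k = (if k \<le> i then a i + (q - qq (n - 1 + i)) / real i else a k)"
      using A k by (cases "k \<le> i") auto
  qed
  have Qa: "\<And>i. i \<in> {1..n} \<Longrightarrow> qq i = sum a {1..i} + real (n - i) * a i" using Q1f by blast
  have Qb: "\<And>i. i \<in> {1..n} \<Longrightarrow> qq (n - 1 + i) = real (i - 1) * a i + sum a {i..n}" using Q2f by blast
  have Q1: "qq 1 = real n * a 1"
    using Qa[of 1] n2 by (simp add: of_nat_diff algebra_simps)
  have Qn: "qq n = 1" using Qa[of n] n2 s1 by simp
  have QN: "qq (2 * n - 1) = real n * a n"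
  proof -
    have "qq (n - 1 + n) = real (n - 1) * a n + sum a {n..n}" using Qb[of n] n2 by simp
    moreover have "n - 1 + n = 2 * n - 1" using n2 by simp
    ultimately show ?thesis using n2 by (simp add: of_nat_diff algebra_simps)
  qed
  have D1: "\<And>i. i \<in> {1..n-1} \<Longrightarrow> qq (Suc i) - qq i = real (n - i) * (a (Suc i) - a i)"
  proof -
    fix i assume i: "i \<in> {1..n-1}"
    have "qq (Suc i) = sum a {1..Suc i} + real (n - Suc i) * a (Suc i)" using Qa[of "Suc i"] i by auto
    moreover have "qq i = sum a {1..i} + real (n - i) * a i" using Qa[of i] i by auto
    moreover have "sum a {1..Suc i} = sum a {1..i} + a (Suc i)" by simp
    moreover have "real (n - Suc i) = real (n - i) - 1"
    proof -
      have "n - i = (n - Suc i) + 1" using i by auto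
      then show ?thesis by simp
    qed
    ultimately show "qq (Suc i) - qq i = real (n - i) * (a (Suc i) - a i)" by (simp add: algebra_simps)
  qed
  have D2: "\<And>i. i \<in> {1..n-1} \<Longrightarrow> qq (n + i) - qq (n - 1 + i) = real i * (a (Suc i) - a i)"
  proof -
    fix i assume i: "i \<in> {1..n-1}"
    have "qq (n - 1 + Suc i) = real (Suc i - 1) * a (Suc i) + sum a {Suc i..n}" using Qb[of "Suc i"] i by auto
    moreover have "n - 1 + Suc i = n + i" using n2 by simp
    moreover have "qq (n - 1 + i) = real (i - 1) * a i + sum a {i..n}" using Qb[of i] i by auto
    moreover have "sum a {i..n} = a i + sum a {Suc i..n}" using i by (intro sum.atLeast_Suc_atMost) auto
    moreover have "real (i - 1) = real i - 1" using i by (simp add: of_nat_diff)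
    ultimately show "qq (n + i) - qq (n - 1 + i) = real i * (a (Suc i) - a i)" by (simp add: algebra_simps)
  qed
  define N where "N = 2 * n - 1"
  have N2: "N \<ge> 2" using n2 unfolding N_def by simp
  have idx: "\<And>m. n \<le> m \<Longrightarrow> m < N \<Longrightarrow> m + 1 - n \<in> {1..n-1} \<and> n - 1 + (m + 1 - n) = m \<and> n + (m + 1 - n) = Suc m"
    unfolding N_def by auto
  have Qinc: "\<forall>m\<in>{1..<N}. qq m < qq (Suc m)"
  proof
    fix m assume m: "m \<in> {1..<N}"
    show "qq m < qq (Suc m)"
    proof (cases "m < n")
      case True
      then have i: "m \<in> {1..n-1}" "m \<in> {1..<n}" using m by auto
      have "real (n - m) * (a (Suc m) - a m) > 0" using True ainc[OF i(2)] by simp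
      moreover have "qq (Suc m) - qq m = real (n - m) * (a (Suc m) - a m)" by (rule D1[OF i(1)])
      ultimately show ?thesis by linarith
    next
      case False
      define i where "i = m + 1 - n"
      have i: "i \<in> {1..n-1}" "n - 1 + i = m" "n + i = Suc m" using idx[of m] False m unfolding i_def by auto
      have "i \<in> {1..<n}" using i n2 by auto
      then have "real i * (a (Suc i) - a i) > 0" using ainc i by simp
      moreover have "qq (n + i) - qq (n - 1 + i) = real i * (a (Suc i) - a i)" by (rule D2[OF i(1)])
      ultimately show ?thesis using i by simp
    qed
  qed
  define lo where "lo = (\<lambda>m::nat. if m < n then m + 1 else 1)"
  define hi where "hi = (\<lambda>m::nat. if m < n then n else m + 1 - n)"
  define sl where "sl = (\<lambda>m k. if k \<in> {lo m..hi m} then 1 / real (hi m - lo m + 1) else (0::real))"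
  have slA: "\<And>m k. m < n \<Longrightarrow> k \<in> {1..n} \<Longrightarrow> sl m k = (if k \<le> m then 0 else 1 / real (n - m))"
  proof -
    fix m k assume m: "m < n" and k: "k \<in> {1..n}"
    have "n - (m + 1) + 1 = n - m" using m by simp
    then show "sl m k = (if k \<le> m then 0 else 1 / real (n - m))"
      using m k unfolding sl_def lo_def hi_def by auto
  qed
  have slB: "\<And>m k. n \<le> m \<Longrightarrow> k \<in> {1..n} \<Longrightarrow> sl m k = (if k \<le> m + 1 - n then 1 / real (m + 1 - n) else 0)"
  proof -
    fix m k assume m: "n \<le> m" and k: "k \<in> {1..n}"
    have "m + 1 - n - 1 + 1 = m + 1 - n" using m by simp
    then show "sl m k = (if k \<le> m + 1 - n then 1 / real (m + 1 - n) else 0)"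
      using m k unfolding sl_def lo_def hi_def by auto
  qed
  have PQ: "\<And>m k. m \<in> {1..<N} \<Longrightarrow> k \<in> {1..n} \<Longrightarrow> P (qq m) k =
     (if m < n then (if k \<le> m then a k else a m) else (if k \<le> m + 1 - n then a (m + 1 - n) else a k))"
  proof -
    fix m k assume m: "m \<in> {1..<N}" and k: "k \<in> {1..n}"
    have qm: "qq m \<in> {qq m..qq (Suc m)}" using Qinc m by (auto intro: less_imp_le)
    show "P (qq m) k =
     (if m < n then (if k \<le> m then a k else a m) else (if k \<le> m + 1 - n then a (m + 1 - n) else a k))"
    proof (cases "m < n")
      case True
      then have i: "m \<in> {1..n-1}" using m by auto
      show ?thesis using P1[OF i qm k] True by simp
    next
      case False
      define i where "i = m + 1 - n"
      have i: "i \<in> {1..n-1}" "n - 1 + i = m" "n + i = Suc m" using idx[of m] False m unfolding i_def by auto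
      have qm': "qq m \<in> {qq (n - 1 + i)..qq (n + i)}" using qm i by simp
      show ?thesis using P2[OF i(1) qm' k] False i unfolding i_def by simp
    qed
  qed
  have aff: "\<forall>m\<in>{1..<N}. \<forall>q\<in>{qq m..qq (Suc m)}. \<forall>k\<in>{1..n}. P q k = P (qq m) k + sl m k * (q - qq m)"
  proof (intro ballI)
    fix m q k assume m: "m \<in> {1..<N}" and q: "q \<in> {qq m..qq (Suc m)}" and k: "k \<in> {1..n}"
    show "P q k = P (qq m) k + sl m k * (q - qq m)"
    proof (cases "m < n")
      case True
      then have i: "m \<in> {1..n-1}" using m by auto
      have e1: "P q k = (if k \<le> m then a k else a m + (q - qq m) / real (n - m))" using P1[OF i q k] by simp
      have e2: "P (qq m) k = (if k \<le> m then a k else a m)" using PQ[OF m k] True by simp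
      show ?thesis unfolding e1 e2 slA[OF True k] by (simp add: divide_inverse mult.commute)
    next
      case False
      define i where "i = m + 1 - n"
      have i: "i \<in> {1..n-1}" "n - 1 + i = m" "n + i = Suc m" using idx[of m] False m unfolding i_def by auto
      have q': "q \<in> {qq (n - 1 + i)..qq (n + i)}" using q i by simp
      have "n \<le> m" using False by simp
      have e1: "P q k = (if k \<le> i then a i + (q - qq m) / real i else a k)" using P2[OF i(1) q' k] i by simp
      have e2: "P (qq m) k = (if k \<le> i then a i else a k)" using PQ[OF m k] False unfolding i_def by simp
      show ?thesis unfolding e1 e2 slB[OF \<open>n \<le> m\<close> k] i_def[symmetric]
        by (simp add: divide_inverse mult.commute)
    qed
  qed
  have brk: "\<forall>m\<in>{2..<N}. \<exists>k\<in>{1..n}. sl (m-1) k \<noteq> sl m k"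
  proof
    fix m assume m: "m \<in> {2..<N}"
    consider "m < n" | "m = n" | "n < m" by linarith
    then show "\<exists>k\<in>{1..n}. sl (m-1) k \<noteq> sl m k"
    proof cases
      case 1
      have k: "m \<in> {1..n}" using 1 m by auto
      have "sl (m-1) m \<noteq> 0" using slA[of "m-1" m] 1 k m by auto
      moreover have "sl m m = 0" using slA[of m m] 1 k by auto
      ultimately have "sl (m-1) m \<noteq> sl m m" by simp
      then show ?thesis using k by blast
    next
      case 2
      have k: "n \<in> {1..n}" using n2 by auto
      have "sl (m-1) n \<noteq> 0" using slA[of "m-1" n] 2 k n2 by auto
      moreover have "sl m n = 0" using slB[of m n] 2 k n2 by auto
      ultimately have "sl (m-1) n \<noteq> sl m n" by simp
      then show ?thesis using k by blast
    next
      case 3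
      have k: "m + 1 - n \<in> {1..n}" using 3 m unfolding N_def by auto
      have "sl m (m + 1 - n) \<noteq> 0" using slB[of m "m + 1 - n"] 3 k by auto
      moreover have "sl (m-1) (m + 1 - n) = 0" using slB[of "m-1" "m + 1 - n"] 3 k by auto
      ultimately have "sl (m-1) (m + 1 - n) \<noteq> sl m (m + 1 - n)" by simp
      then show ?thesis using k by blast
    qed
  qed
  have reg: "\<forall>m\<in>{1..<N}. 1 \<le> lo m \<and> lo m \<le> hi m \<and> hi m \<le> n \<and>
       (\<forall>k\<in>{1..n}. sl m k = (if k \<in> {lo m..hi m} then 1 / real (hi m - lo m + 1) else 0))"
    unfolding lo_def hi_def sl_def N_def by auto
  have regeq: "\<forall>m\<in>{1..<N}. \<forall>k\<in>{lo m..hi m}. P (qq m) k = P (qq m) (lo m)"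
  proof (intro ballI)
    fix m k assume m: "m \<in> {1..<N}" and k: "k \<in> {lo m..hi m}"
    have r: "1 \<le> lo m" "lo m \<le> hi m" "hi m \<le> n" using reg m by auto
    have k1: "k \<in> {1..n}" "lo m \<in> {1..n}" using k r by auto
    show "P (qq m) k = P (qq m) (lo m)"
      using PQ[OF m k1(1)] PQ[OF m k1(2)] k unfolding lo_def hi_def by (auto split: if_splits)
  qed
  have regeq3: "\<forall>m\<in>{2..<N}. \<forall>k\<in>{lo (m-1)..hi m}. P (qq m) k = P (qq m) (lo (m-1))"
  proof (intro ballI)
    fix m k assume m: "m \<in> {2..<N}" and k: "k \<in> {lo (m-1)..hi m}"
    have m1: "m \<in> {1..<N}" using m by auto
    consider "m < n" | "m = n" | "n < m" by linarith
    then show "P (qq m) k = P (qq m) (lo (m-1))"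
    proof cases
      case 1
      then have "lo (m-1) = m" "hi m = n" using m unfolding lo_def hi_def by auto
      then have kk: "k \<in> {m..n}" "m \<in> {1..n}" using k 1 m by auto
      have "k \<in> {1..n}" using kk m by auto
      then show ?thesis using PQ[OF m1, of k] PQ[OF m1, of m] kk \<open>lo (m-1) = m\<close> 1 by auto
    next
      case 2
      then have "lo (m-1) = n" "hi m = 1" using m n2 unfolding lo_def hi_def by auto
      then show ?thesis using k n2 by auto
    next
      case 3
      then have "lo (m-1) = 1" "hi m = m + 1 - n" using m unfolding lo_def hi_def by auto
      then have kk: "k \<in> {1..m + 1 - n}" using k by auto
      have "m + 1 - n \<le> n" using m unfolding N_def by auto
      then have "k \<in> {1..n}" "(1::nat) \<in> {1..n}" using kk n2 by auto
      then show ?thesis using PQ[OF m1, of k] PQ[OF m1, of 1] kk \<open>lo (m-1) = 1\<close> 3 by auto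
    qed
  qed
  interpret pwl n N qq sl P lo hi
    using N2 Qinc aff brk reg regeq regeq3 by unfold_locales
  have I_eq: "{qq 1..qq N} = {real n * a 1..real n * a n}" using Q1 QN unfolding N_def by simp
  have a1: "a 1 > 0" using apos n2 by auto
  have qpos: "\<And>q. q \<in> {qq 1..qq N} \<Longrightarrow> q > 0"
  proof -
    fix q assume "q \<in> {qq 1..qq N}"
    then have "real n * a 1 \<le> q" using Q1 by auto
    moreover have "real n * a 1 > 0" using a1 n2 by simp
    ultimately show "q > 0" by linarith
  qed
  have rep: "\<And>q. q \<in> {qq 1..qq N} \<Longrightarrow> \<exists>p. asc n p \<and> p 1 > 0 \<and> sum p {1..n} = q \<and>
      (\<forall>k\<in>{1..n}. P q k = p k) \<and> (\<forall>j\<in>{1..n-1}. psi j a * q \<le> psi j p)"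
  proof -
    fix q assume qI: "q \<in> {qq 1..qq N}"
    obtain m where m: "m \<in> {1..<N}" "q \<in> {qq m..qq (Suc m)}" using locate[OF qI] by blast
    show "\<exists>p. asc n p \<and> p 1 > 0 \<and> sum p {1..n} = q \<and>
      (\<forall>k\<in>{1..n}. P q k = p k) \<and> (\<forall>j\<in>{1..n-1}. psi j a * q \<le> psi j p)"
    proof (cases "m < n")
      case True
      have i: "m \<in> {1..n-1}" using True m by auto
      define r where "r = real (n - m)"
      have r: "r > 0" using True unfolding r_def by simp
      define x where "x = a m + (q - qq m) / r"
      have xlo: "a m \<le> x" using m r unfolding x_def by auto
      have "(q - qq m) / r \<le> (qq (Suc m) - qq m) / r" using m r by (intro divide_right_mono) auto
      also have "\<dots> = a (Suc m) - a m" using D1[OF i] r unfolding r_def by simp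
      finally have xhi: "x \<le> a (Suc m)" unfolding x_def by simp
      define p where "p = (\<lambda>k. if k \<le> m then a k else x)"
      note ph = phase1[OF os i xlo xhi p_def]
      have "sum p {1..n} = sum a {1..m} + r * x" using ph(3) unfolding r_def .
      also have "\<dots> = sum a {1..m} + r * a m + (q - qq m)"
      proof -
        have "r * ((q - qq m) / r) = q - qq m" using r by simp
        then show ?thesis unfolding x_def by (simp add: distrib_left)
      qed
      also have "\<dots> = q" using Qa[of m] i unfolding r_def by auto
      finally have sq: "sum p {1..n} = q" .
      have Pp: "\<forall>k\<in>{1..n}. P q k = p k" using P1[OF i m(2)] unfolding p_def x_def r_def by auto
      show ?thesis using ph(1,2,4) sq Pp by (intro exI[of _ p]) auto
    next
      case False
      define i where "i = m + 1 - n"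
      have i: "i \<in> {1..n-1}" "n - 1 + i = m" "n + i = Suc m" using idx[of m] False m unfolding i_def by auto
      define r where "r = real i"
      have r: "r > 0" using i unfolding r_def by simp
      define y where "y = a i + (q - qq m) / r"
      have ylo: "a i \<le> y" using m r unfolding y_def by auto
      have "(q - qq m) / r \<le> (qq (Suc m) - qq m) / r" using m r by (intro divide_right_mono) auto
      also have "\<dots> = a (Suc i) - a i" using D2[OF i(1)] r i unfolding r_def by simp
      finally have yhi: "y \<le> a (Suc i)" unfolding y_def by simp
      define p where "p = (\<lambda>k. if k \<le> i then y else a k)"
      note ph = phase2[OF os i(1) ylo yhi p_def]
      have qm: "qq m = real (i - 1) * a i + sum a {i..n}" using Qb[of i] i by auto
      have si: "sum a {i..n} = a i + sum a {Suc i..n}" using i by (intro sum.atLeast_Suc_atMost) auto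
      have ri: "real (i - 1) = r - 1" using i unfolding r_def by (simp add: of_nat_diff)
      have "sum p {1..n} = r * y + sum a {Suc i..n}" using ph(3) unfolding r_def .
      also have "\<dots> = r * a i + (q - qq m) + sum a {Suc i..n}"
      proof -
        have "r * ((q - qq m) / r) = q - qq m" using r by simp
        then show ?thesis unfolding y_def by (simp add: distrib_left)
      qed
      also have "\<dots> = q" unfolding qm si ri by (simp add: algebra_simps)
      finally have sq: "sum p {1..n} = q" .
      have q': "q \<in> {qq (n - 1 + i)..qq (n + i)}" using m i by simp
      have Pp: "\<forall>k\<in>{1..n}. P q k = p k" using P2[OF i(1) q'] i unfolding p_def y_def r_def by auto
      show ?thesis using ph(1,2,4) sq Pp by (intro exI[of _ p]) auto
    qed
  qed
  have nN: "n \<in> {1..<N}" "(1::nat) \<in> {1..<N}" using n2 unfolding N_def by auto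
  have Pn: "\<And>k. k \<in> {1..n} \<Longrightarrow> P (qq n) k = a k" using PQ[OF nN(1)] by auto
  have P1v: "\<And>k. k \<in> {1..n} \<Longrightarrow> P (qq 1) k = a 1" using PQ[OF nN(2)] n2 by auto
  have qnI: "qq n \<in> {qq 1..qq N}" using Q_le[of 1 n] Q_le[of n N] n2 unfolding N_def by auto
  have q1I: "qq 1 \<in> {qq 1..qq N}" using Q_le[of 1 N] N2 by auto
  show ?thesis
  proof (intro conjI ballI)
    show "gen_system n {real n * a 1..real n * a n} P"
      unfolding I_eq[symmetric] gen_system_def
    proof (intro conjI)
      show "is_interval {qq 1..qq N}" unfolding is_interval_1 by auto
      show "{qq 1..qq N} \<subseteq> {0..}" using qpos by (auto intro: less_imp_le)
      show "interior {qq 1..qq N} \<noteq> {}" using Q_less[of 1 N] N2 by auto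
      show "cont_piecewise_linear n {qq 1..qq N} P" by (rule cpl) (unfold I_eq, rule cont)
      show "\<forall>q\<in>{qq 1..qq N}. 0 \<le> P q 1 \<and> (\<forall>j\<in>{1..<n}. P q j \<le> P q (Suc j)) \<and> (\<Sum>j = 1..n. P q j) = q"
      proof
        fix q assume qI: "q \<in> {qq 1..qq N}"
        obtain p where p: "asc n p" "p 1 > 0" "sum p {1..n} = q" "\<forall>k\<in>{1..n}. P q k = p k"
          using rep[OF qI] by blast
        have "P q 1 = p 1" using p(4) n2 by auto
        moreover have "\<forall>j\<in>{1..<n}. P q j \<le> P q (Suc j)" using p(1,4) unfolding asc_def by auto
        moreover have "(\<Sum>j = 1..n. P q j) = sum p {1..n}" using p(4) by (intro sum.cong) auto
        ultimately show "0 \<le> P q 1 \<and> (\<forall>j\<in>{1..<n}. P q j \<le> P q (Suc j)) \<and> (\<Sum>j = 1..n. P q j) = q"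
          using p(2,3) by auto
      qed
      show "\<forall>H. is_interval H \<and> open H \<and> H \<noteq> {} \<and> H \<subseteq> {qq 1..qq N} \<and>
          (\<forall>t\<in>H. \<forall>j\<in>{1..n}. (\<lambda>t. P t j) differentiable (at t)) \<longrightarrow>
        (\<exists>r1 r2. 1 \<le> r1 \<and> r1 \<le> r2 \<and> r2 \<le> n \<and>
           (\<forall>t\<in>H. \<forall>j\<in>{r1..r2}. P t j = P t r1 \<and>
               ((\<lambda>t. P t j) has_real_derivative 1 / real (r2 - r1 + 1)) (at t)) \<and>
           (\<forall>j\<in>{1..n} - {r1..r2}. \<forall>t\<in>H. \<forall>u\<in>H. P t j = P u j))" by (rule G2)
      show "\<forall>q\<in>interior {qq 1..qq N}. q \<in> nondiff_set n {qq 1..qq N} P \<longrightarrow>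
        (\<forall>r1 r2 s1 s2. 1 \<le> r1 \<and> r1 \<le> r2 \<and> r2 \<le> n \<and> 1 \<le> s1 \<and> s1 \<le> s2 \<and> s2 \<le> n \<and>
           (\<forall>j\<in>{r1..r2}. ((\<lambda>t. P t j) has_real_derivative 1 / real (r2 - r1 + 1)) (at q within {..q})) \<and>
           (\<forall>j\<in>{s1..s2}. ((\<lambda>t. P t j) has_real_derivative 1 / real (s2 - s1 + 1)) (at q within {q..})) \<and>
           r1 < s2 \<longrightarrow> (\<forall>j\<in>{r1..s2}. P q j = P q r1))" by (rule G3)
    qed
  next
    fix j assume j: "j \<in> {1..n-1}"
    define F where "F = (\<lambda>q. psi j (\<lambda>k. P q k / q))"
    have Fv: "psi j a \<le> F q \<and> F q \<le> real j / real n" if qI: "q \<in> {qq 1..qq N}" for q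
    proof -
      obtain p where p: "asc n p" "p 1 > 0" "sum p {1..n} = q" "\<forall>k\<in>{1..n}. P q k = p k"
          "\<forall>j\<in>{1..n-1}. psi j a * q \<le> psi j p"
        using rep[OF qI] by blast
      have q0: "q > 0" using qpos[OF qI] .
      have "F q = psi j p / q" unfolding F_def psi_def sum_divide_distrib using p(4) j
        by (intro sum.cong) auto
      moreover have "psi j a \<le> psi j p / q" using p(5) j q0 by (simp add: pos_le_divide_eq)
      moreover have "psi j p / q \<le> real j / real n"
      proof -
        have av: "real n * psi j p \<le> real j * psi n p" using avg[OF p(1), of j n] j by auto
        have "psi n p = q" using p(3) unfolding psi_def .
        then have av2: "real n * psi j p \<le> real j * q" using av by simp
        have n0: "real n > 0" using n2 by simp
        have "psi j p / q = (real n * psi j p) / (real n * q)" using n0 by simp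
        also have "\<dots> \<le> (real j * q) / (real n * q)" using av2 n0 q0 by (intro divide_right_mono) auto
        also have "\<dots> = real j / real n" using q0 by simp
        finally show ?thesis .
      qed
      ultimately show ?thesis by simp
    qed
    have Pn1: "\<And>k. k \<in> {1..n} \<Longrightarrow> P 1 k = a k" using Pn Qn by metis
    have Fn: "F (qq n) = psi j a"
      unfolding F_def psi_def Qn using Pn1 j by (intro sum.cong) auto
    have F1: "F (qq 1) = real j / real n"
    proof -
      have "F (qq 1) = (\<Sum>k=1..j. a 1 / (real n * a 1))"
        unfolding F_def psi_def Q1[symmetric] using P1v j by (intro sum.cong) auto
      also have "\<dots> = real j / real n" using a1 by simp
      finally show ?thesis .
    qed
    have "Inf (F ` {qq 1..qq N}) = psi j a"
      by (rule cInf_eq_minimum) (use Fn[symmetric] qnI Fv in auto)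
    then show "Inf ((\<lambda>q. psi j (\<lambda>k. P q k / q)) ` {real n * a 1..real n * a n}) = psi j a"
      unfolding F_def I_eq .
    have "Sup (F ` {qq 1..qq N}) = real j / real n"
      by (rule cSup_eq_maximum) (use F1[symmetric] q1I Fv in auto)
    then show "Sup ((\<lambda>q. psi j (\<lambda>k. P q k / q)) ` {real n * a 1..real n * a n}) = real j / real n"
      unfolding F_def I_eq .
  qed
qed


end
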